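(* Let $\mathbb{Z}[a,b]$ carry the $\lambda$-ring structure $\Lambda_1\otimes\Lambda_{-1}$, i.e. $a$ is a line element and $b$ satisfies $\lambda^n(b)=b^n$ for all $n$, and let $x=a+b$. Then the $\lambda$-ring homomorphism $\Lambda\to\mathbb{Z}[a,b]$ sending $e_1$ to $x$ has kernel $I_{(2,2)}$ and image $\mathbb{Z}+x\,\mathbb{Z}[a,b]$; thus $\Lambda_{(2,2)}=\Lambda/I_{(2,2)}\cong\mathbb{Z}+x\mathbb{Z}[a,b]$, and in it $\lambda^{n+1}(x)=xb^n$ for all $n\ge0$.
   Context: $\lambda$-rings are special $\lambda$-rings. $\Lambda=\mathbb{Z}[e_1,e_2,\dots]$ is the ring of symmetric functions, the free $\lambda$-ring on $e_1$ with $\lambda^n(e_1)=e_n$, with Schur function basis $s_\pi$. $I_{(2,2)}$ is the subgroup (ideal) of $\Lambda$ spanned by the $s_\pi$ for partitions $\pi$ whose Young diagram contains that of $(2,2)$, i.e. $\pi_1\ge2$ and $\pi_2\ge2$. A line element is an element $\ell$ with $\lambda^n(\ell)=0$ for $n>1$. *)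

theory Defs
  imports "HOL-Library.Poly_Mapping" "HOL-Computational_Algebra.Polynomial"
    "HOL-Combinatorics.Permutations"
begin

text \<open>Polynomial ring over Z in countably many variables; variable n stands for e_(n+1).\<close>
type_synonym symfun = "(nat \<Rightarrow>\<^sub>0 nat) \<Rightarrow>\<^sub>0 int"

definition lvar :: "nat \<Rightarrow> symfun" where
  "lvar n = Poly_Mapping.single (Poly_Mapping.single n 1) 1"

definition elem :: "int \<Rightarrow> symfun" where
  "elem k = (if k < 0 then 0 else if k = 0 then 1 else lvar (nat k - 1))"

definition eval_sym :: "(nat \<Rightarrow> 'a::comm_ring_1) \<Rightarrow> symfun \<Rightarrow> 'a" where
  "eval_sym f p = (\<Sum>m\<in>Poly_Mapping.keys p.
      of_int (Poly_Mapping.lookup p m) * (\<Prod>i\<in>Poly_Mapping.keys m. f i ^ Poly_Mapping.lookup m i))"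

definition is_partition :: "nat list \<Rightarrow> bool" where
  "is_partition p \<longleftrightarrow> sorted_wrt (\<ge>) p \<and> 0 \<notin> set p"

definition conj_part :: "nat list \<Rightarrow> nat list" where
  "conj_part p = map (\<lambda>j. length (filter (\<lambda>x. j < x) p)) [0..<(if p = [] then 0 else hd p)]"

text \<open>Schur function via the dual Jacobi--Trudi identity s_p = det(e_(p'_i - i + j)).\<close>
definition schur :: "nat list \<Rightarrow> symfun" where
  "schur p = (let mu = conj_part p; m = length mu in
     (\<Sum>\<sigma> | \<sigma> permutes {..<m}.
        of_int (sign \<sigma>) * (\<Prod>i<m. elem (int (mu ! i) - int i + int (\<sigma> i)))))"

definition contains22 :: "nat list \<Rightarrow> bool" where
  "contains22 p \<longleftrightarrow> length p \<ge> 2 \<and> p ! 0 \<ge> 2 \<and> p ! 1 \<ge> 2"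

definition I22 :: "symfun set" where
  "I22 = {(\<Sum>p\<in>F. of_int (c p) * schur p) | F c.
            finite F \<and> (\<forall>p\<in>F. is_partition p \<and> contains22 p)}"

text \<open>Z[a,b] as int poly poly: outer variable b, inner variable a.\<close>
type_synonym zab = "int poly poly"

definition va :: zab where "va = [:[:0, 1:]:]"
definition vb :: zab where "vb = [:0, 1:]"

text \<open>Adams operations: the ring endomorphisms with psi^k(a) = a^k (a a line element)
  and psi^k(b) = (-1)^(k+1) b^k (equivalently lambda_t(b) = 1/(1-bt)).\<close>
definition adams :: "nat \<Rightarrow> zab \<Rightarrow> zab" where
  "adams k p = pcompose (map_poly (\<lambda>q. pcompose q (monom 1 k)) p) (monom [:(-1) ^ (k + 1):] k)"

text \<open>Lambda operations on the torsion-free ring Z[a,b], determined by the Adams operations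
  through the Newton identities n lambda^n = sum_(i=1..n) (-1)^(i-1) psi^i lambda^(n-i).\<close>
function lam :: "nat \<Rightarrow> zab \<Rightarrow> zab" where
  "lam 0 x = 1"
| "lam (Suc n) x = (\<Sum>i\<in>{1..Suc n}. (-1) ^ (i + 1) * adams i x * lam (Suc n - i) x)
                     div of_nat (Suc n)"
  by pat_completeness auto
termination by (relation "measure fst") auto

definition xab :: zab where "xab = va + vb"

text \<open>The lambda-ring homomorphism Lambda \<rightarrow> Z[a,b] with e_1 \<mapsto> x: since Lambda is the free
  lambda-ring on e_1 with lambda^n(e_1) = e_n, it is the ring homomorphism e_n \<mapsto> lambda^n(x).\<close>
definition phi :: "symfun \<Rightarrow> zab" where
  "phi = eval_sym (\<lambda>n. lam (Suc n) xab)"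

end

theory Submission
  imports Defs
begin

definition emono :: "(nat \<Rightarrow> 'a::comm_ring_1) \<Rightarrow> (nat \<Rightarrow>\<^sub>0 nat) \<Rightarrow> 'a" where
  "emono f m = (\<Prod>i\<in>Poly_Mapping.keys m. f i ^ Poly_Mapping.lookup m i)"

lemma mono_superset:
  assumes "finite S" "Poly_Mapping.keys m \<subseteq> S"
  shows "emono f m = (\<Prod>i\<in>S. f i ^ Poly_Mapping.lookup m i)"
  unfolding emono_def
  by (rule prod.mono_neutral_left) (use assms in \<open>auto simp: in_keys_iff\<close>)

lemma mono_add: "emono f (m1 + m2) = emono f m1 * emono f m2"
proof -
  let ?S = "Poly_Mapping.keys m1 \<union> Poly_Mapping.keys m2"
  have "emono f (m1 + m2) = (\<Prod>i\<in>?S. f i ^ Poly_Mapping.lookup (m1 + m2) i)"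
    by (rule mono_superset) (auto dest: subsetD[OF keys_add])
  also have "\<dots> = (\<Prod>i\<in>?S. f i ^ Poly_Mapping.lookup m1 i) * (\<Prod>i\<in>?S. f i ^ Poly_Mapping.lookup m2 i)"
    by (simp add: lookup_add power_add prod.distrib)
  also have "\<dots> = emono f m1 * emono f m2"
    using mono_superset[of ?S m1 f] mono_superset[of ?S m2 f] by simp
  finally show ?thesis .
qed

lemma mono_zero [simp]: "emono f 0 = 1"
  by (simp add: emono_def)

lemma eval_sym_superset:
  assumes "finite S" "Poly_Mapping.keys p \<subseteq> S"
  shows "eval_sym f p = (\<Sum>m\<in>S. of_int (Poly_Mapping.lookup p m) * emono f m)"
  unfolding eval_sym_def emono_def[symmetric]
  by (rule sum.mono_neutral_left) (use assms in \<open>auto simp: in_keys_iff\<close>)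

lemma eval_sym_diff: "eval_sym f (p - q) = eval_sym f p - eval_sym f q"
proof -
  let ?S = "Poly_Mapping.keys p \<union> Poly_Mapping.keys q"
  have "eval_sym f (p - q) = (\<Sum>m\<in>?S. of_int (Poly_Mapping.lookup (p - q) m) * emono f m)"
    by (rule eval_sym_superset) (auto dest: subsetD[OF keys_diff])
  also have "\<dots> = (\<Sum>m\<in>?S. of_int (Poly_Mapping.lookup p m) * emono f m) - (\<Sum>m\<in>?S. of_int (Poly_Mapping.lookup q m) * emono f m)"
    by (simp add: lookup_minus left_diff_distrib sum_subtractf)
  also have "\<dots> = eval_sym f p - eval_sym f q"
    using eval_sym_superset[of ?S p f] eval_sym_superset[of ?S q f] by simp
  finally show ?thesis .
qed

lemma eval_sym_0 [simp]: "eval_sym f 0 = 0"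
  by (simp add: eval_sym_def)

lemma eval_sym_add: "eval_sym f (p + q) = eval_sym f p + eval_sym f q"
  using eval_sym_diff[of f p "0 - q"] eval_sym_diff[of f 0 q] by simp

lemma eval_sym_uminus: "eval_sym f (- q) = - eval_sym f q"
  using eval_sym_diff[of f 0 q] by simp

lemma eval_sym_single: "eval_sym f (Poly_Mapping.single m c) = of_int c * emono f m"
  by (simp add: eval_sym_def emono_def)

lemma eval_sym_mult: "eval_sym f (p * q) = eval_sym f p * eval_sym f q"
proof -
  have sing: "eval_sym f (frag_of m1 * frag_of m2) = eval_sym f (frag_of m1) * eval_sym f (frag_of m2)" for m1 m2
    by (simp only: mult_single eval_sym_single mono_add) simp
  have step: "eval_sym f (frag_of m1 * q) = eval_sym f (frag_of m1) * eval_sym f q" for m1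
  proof (induction q rule: frag_induction[OF subset_UNIV])
    case 1 then show ?case by simp
  next
    case (2 x) show ?case by (rule sing)
  next
    case (3 a b) then show ?case by (simp add: right_diff_distrib eval_sym_diff)
  qed
  show ?thesis
  proof (induction p rule: frag_induction[OF subset_UNIV])
    case 1 then show ?case by simp
  next
    case (2 x) show ?case by (rule step)
  next
    case (3 a b) then show ?case by (simp add: left_diff_distrib eval_sym_diff)
  qed
qed

lemma eval_sym_1 [simp]: "eval_sym f 1 = 1"
  using eval_sym_single[of f 0 1] by (simp add: emono_def)

lemma eval_sym_of_int [simp]: "eval_sym f (of_int c) = of_int c"
proof -
  have "eval_sym f (Poly_Mapping.single 0 (of_int c)) = of_int c"
    by (simp add: eval_sym_single emono_def)
  thus ?thesis by (simp only: single_of_int)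
qed

lemma eval_sym_sum: "eval_sym f (sum g A) = (\<Sum>a\<in>A. eval_sym f (g a))"
  by (induction A rule: infinite_finite_induct) (auto simp: eval_sym_add)

lemma eval_sym_prod: "eval_sym f (prod g A) = (\<Prod>a\<in>A. eval_sym f (g a))"
  by (induction A rule: infinite_finite_induct) (auto simp: eval_sym_mult)

lemma eval_sym_power: "eval_sym f (p ^ n) = eval_sym f p ^ n"
  by (induction n) (auto simp: eval_sym_mult)

lemma eval_sym_prod_list: "eval_sym f (prod_list xs) = prod_list (map (eval_sym f) xs)"
  by (induction xs) (auto simp: eval_sym_mult)

lemma eval_sym_lvar [simp]: "eval_sym f (lvar n) = f n"
  by (simp add: lvar_def eval_sym_single emono_def)

lemma x_monom: "[:0, 1:] = (monom 1 1 :: 'a::comm_semiring_1 poly)"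
  by (simp add: monom_Suc monom_0)

lemma const_pow: "[:c:] ^ k = [:(c::'a::comm_semiring_1) ^ k:]"
  by (induction k) (auto simp: mult.commute)

lemma va_pow: "va ^ k = [:monom 1 k:]"
  unfolding va_def x_monom const_pow by (simp add: monom_power)

lemma vb_pow: "vb ^ k = monom 1 k"
  unfolding vb_def x_monom by (simp add: monom_power)

lemma xab_pCons: "xab = pCons [:0,1:] [:1:]"
  unfolding xab_def va_def vb_def by simp

lemma adams_xab: "adams k xab = va ^ k + monom [:(-1) ^ (k + 1):] k"
  unfolding adams_def xab_pCons va_pow
  by (simp add: map_poly_pCons pcompose_pCons pcompose_1)

definition Lf :: "'a::comm_ring_1 \<Rightarrow> 'a \<Rightarrow> nat \<Rightarrow> 'a" where
  "Lf a b k = (if k = 0 then 1 else (a + b) * b ^ (k - 1))"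

lemma sum_split1: "(\<Sum>i\<in>{1..Suc (Suc n)}. f i) = f 1 + (\<Sum>i\<in>{1..Suc n}. f (Suc i))"
proof -
  have "(\<Sum>i\<in>{1..Suc (Suc n)}. f i) = f 1 + (\<Sum>i\<in>{Suc 1..Suc (Suc n)}. f i)"
    by (rule sum.atLeast_Suc_atMost) simp
  also have "(\<Sum>i\<in>{Suc 1..Suc (Suc n)}. f i) = (\<Sum>i\<in>{1..Suc n}. f (Suc i))"
    by (rule sum.shift_bounds_cl_Suc_ivl)
  finally show ?thesis .
qed

lemma newtonT: "(\<Sum>i\<in>{1..Suc n}. (-1) ^ (i + 1) * a ^ i * Lf a b (Suc n - i)) = a * b ^ n"
proof (induction n)
  case 0 then show ?case by (simp add: Lf_def)
next
  case (Suc n)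
  have "(\<Sum>i\<in>{1..Suc (Suc n)}. (-1) ^ (i + 1) * a ^ i * Lf a b (Suc (Suc n) - i))
      = a * Lf a b (Suc n) + (\<Sum>i\<in>{1..Suc n}. (-1) ^ (Suc i + 1) * a ^ Suc i * Lf a b (Suc (Suc n) - Suc i))"
    by (subst sum_split1) simp
  also have "(\<Sum>i\<in>{1..Suc n}. (-1) ^ (Suc i + 1) * a ^ Suc i * Lf a b (Suc (Suc n) - Suc i))
     = - a * (\<Sum>i\<in>{1..Suc n}. (-1) ^ (i + 1) * a ^ i * Lf a b (Suc n - i))"
    by (simp add: sum_distrib_left algebra_simps)
  also have "a * Lf a b (Suc n) + - a * (\<Sum>i\<in>{1..Suc n}. (-1) ^ (i + 1) * a ^ i * Lf a b (Suc n - i))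
     = a * Lf a b (Suc n) - a * (a * b ^ n)" using Suc.IH by simp
  also have "\<dots> = a * b ^ Suc n" by (simp add: Lf_def algebra_simps)
  finally show ?case .
qed

lemma newtonU: "(\<Sum>i\<in>{1..Suc n}. b ^ i * Lf a b (Suc n - i)) = b ^ Suc n + of_nat n * (a + b) * b ^ n"
proof (induction n)
  case 0 then show ?case by (simp add: Lf_def)
next
  case (Suc n)
  have "(\<Sum>i\<in>{1..Suc (Suc n)}. b ^ i * Lf a b (Suc (Suc n) - i))
      = b * Lf a b (Suc n) + (\<Sum>i\<in>{1..Suc n}. b ^ Suc i * Lf a b (Suc (Suc n) - Suc i))"
    by (subst sum_split1) simp
  also have "(\<Sum>i\<in>{1..Suc n}. b ^ Suc i * Lf a b (Suc (Suc n) - Suc i))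
     = b * (\<Sum>i\<in>{1..Suc n}. b ^ i * Lf a b (Suc n - i))"
    by (simp add: sum_distrib_left algebra_simps)
  also have "b * Lf a b (Suc n) + b * (\<Sum>i\<in>{1..Suc n}. b ^ i * Lf a b (Suc n - i))
     = b * Lf a b (Suc n) + b * (b ^ Suc n + of_nat n * (a + b) * b ^ n)" using Suc.IH by simp
  also have "\<dots> = b ^ Suc (Suc n) + of_nat (Suc n) * (a + b) * b ^ Suc n" by (simp add: Lf_def algebra_simps)
  finally show ?case .
qed

lemma newton: "(\<Sum>i\<in>{1..Suc n}. (-1) ^ (i + 1) * (a ^ i + (-1) ^ (i + 1) * b ^ i) * Lf a b (Suc n - i))
   = of_nat (Suc n) * ((a + b) * b ^ n)"
proof -
  have "(\<Sum>i\<in>{1..Suc n}. (-1) ^ (i + 1) * (a ^ i + (-1) ^ (i + 1) * b ^ i) * Lf a b (Suc n - i))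
    = (\<Sum>i\<in>{1..Suc n}. (-1) ^ (i + 1) * a ^ i * Lf a b (Suc n - i) + b ^ i * Lf a b (Suc n - i))"
  proof (rule sum.cong)
    fix i
    have "(-1) ^ (i + 1) * ((-1) ^ (i + 1) :: 'a) = 1"
      by (simp flip: power_add)
    then show "(-1) ^ (i + 1) * (a ^ i + (-1) ^ (i + 1) * b ^ i) * Lf a b (Suc n - i)
       = (-1) ^ (i + 1) * a ^ i * Lf a b (Suc n - i) + b ^ i * Lf a b (Suc n - i)"
      by (simp add: algebra_simps)
  qed simp
  also have "\<dots> = a * b ^ n + (b ^ Suc n + of_nat n * (a + b) * b ^ n)"
    by (simp only: sum.distrib newtonT newtonU)
  finally show ?thesis by (simp add: algebra_simps)
qed

lemma lam_xab: "lam k xab = Lf va vb k"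
proof (induction k rule: less_induct)
  case (less k)
  show ?case
  proof (cases k)
    case 0 then show ?thesis by (simp add: Lf_def)
  next
    case (Suc n)
    have "(\<Sum>i\<in>{1..Suc n}. (-1) ^ (i + 1) * adams i xab * lam (Suc n - i) xab)
       = (\<Sum>i\<in>{1..Suc n}. (-1) ^ (i + 1) * (va ^ i + (-1) ^ (i + 1) * vb ^ i) * Lf va vb (Suc n - i))"
    proof (rule sum.cong)
      fix i assume i: "i \<in> {1..Suc n}"
      have "lam (Suc n - i) xab = Lf va vb (Suc n - i)"
        using i Suc by (intro less.IH) auto
      moreover have "adams i xab = va ^ i + (-1) ^ (i + 1) * vb ^ i"
      proof -
        have m: "monom [:(-1::int)^(i+1):] i = smult [:(-1)^(i+1):] (monom 1 i)" by (simp add: smult_monom)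
        have "smult [:(-1::int)^(i+1):] (monom 1 i) = [:[:(-1)^(i+1):]:] * monom 1 i" by simp
        also have "[:[:(-1::int)^(i+1):]:] = (-1) ^ (i + 1)" 
        proof -
          have "[:[:(-1::int)^(i+1):]:] = (of_int ((-1)^(i+1)) :: int poly poly)"
            by (simp only: of_int_poly) simp
          also have "\<dots> = (-1) ^ (i + 1)" by simp
          finally show ?thesis .
        qed
        finally show ?thesis unfolding adams_xab vb_pow m by simp
      qed
      ultimately show "(-1) ^ (i + 1) * adams i xab * lam (Suc n - i) xab
          = (-1) ^ (i + 1) * (va ^ i + (-1) ^ (i + 1) * vb ^ i) * Lf va vb (Suc n - i)" by simp
    qed simp
    also have "\<dots> = of_nat (Suc n) * ((va + vb) * vb ^ n)" by (rule newton)
    finally have "lam (Suc n) xab = (of_nat (Suc n) * ((va + vb) * vb ^ n)) div of_nat (Suc n)"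
      by (simp only: lam.simps)
    also have "\<dots> = (va + vb) * vb ^ n" by (rule nonzero_mult_div_cancel_left, rule of_nat_neq_0)
    finally have "lam (Suc n) xab = (va + vb) * vb ^ n" .
    then show ?thesis using Suc by (simp del: lam.simps add: Lf_def)
  qed
qed

lemma lam_Suc_xab: "lam (Suc n) xab = xab * vb ^ n"
  using lam_xab[of "Suc n"] by (simp del: lam.simps add: Lf_def xab_def)

lemma filter_len_key:
  fixes mu :: "nat list"
  assumes "sorted_wrt (\<ge>) mu" "i < length mu"
  shows "(j < mu ! i) \<longleftrightarrow> i < length (filter (\<lambda>x. j < x) mu)"
  using assms
proof (induction mu arbitrary: i)
  case Nil then show ?case by simp
next
  case (Cons a mu)
  show ?case
  proof (cases "j < a")
    case True
    show ?thesis
    proof (cases i)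
      case 0 then show ?thesis using True by simp
    next
      case (Suc i')
      then show ?thesis using Cons True by auto
    qed
  next
    case False
    have "\<forall>x\<in>set (a#mu). \<not> j < x"
    proof
      fix x assume "x \<in> set (a#mu)"
      then have "x \<le> a" using Cons.prems(1) by auto
      then show "\<not> j < x" using False by simp
    qed
    then have "filter (\<lambda>x. j < x) (a # mu) = []"
      by (simp add: filter_empty_conv)
    moreover have "\<not> j < (a # mu) ! i"
    proof (cases i)
      case 0 then show ?thesis using False by simp
    next
      case (Suc i')
      then have "mu ! i' \<in> set mu" using Cons.prems by auto
      then show ?thesis using Suc False Cons.prems(1) by auto
    qed
    ultimately show ?thesis by simp
  qed
qed

lemma length_filter_antimono:
  assumes "\<And>x. P x \<Longrightarrow> Q x"
  shows "length (filter P xs) \<le> length (filter Q xs)"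
  using assms by (induction xs) auto

lemma conj_len: "length (conj_part p) = (if p = [] then 0 else hd p)"
  by (simp add: conj_part_def)

lemma conj_nth: "j < length (conj_part p) \<Longrightarrow> conj_part p ! j = length (filter (\<lambda>x. j < x) p)"
  by (simp add: conj_part_def split: if_splits)

lemma partition_hd: "is_partition p \<Longrightarrow> p \<noteq> [] \<Longrightarrow> hd p = p ! 0"
  by (simp add: hd_conv_nth)

lemma partition_le_hd: "is_partition p \<Longrightarrow> k < length p \<Longrightarrow> p ! k \<le> p ! 0"
  unfolding is_partition_def
  by (cases k) (auto simp: sorted_wrt_iff_nth_less)

lemma partition_pos: "is_partition p \<Longrightarrow> k < length p \<Longrightarrow> 0 < p ! k"
  unfolding is_partition_def
  by (metis gr0I nth_mem)

lemma conj_partition: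
  assumes "is_partition p"
  shows "is_partition (conj_part p)"
proof -
  have sorted: "sorted_wrt (\<ge>) (conj_part p)"
    unfolding sorted_wrt_iff_nth_less
  proof (intro allI impI)
    fix i j assume ij: "i < j" "j < length (conj_part p)"
    then show "conj_part p ! j \<le> conj_part p ! i"
      by (simp add: conj_nth length_filter_antimono)
  qed
  have "0 \<notin> set (conj_part p)"
  proof
    assume "0 \<in> set (conj_part p)"
    then obtain j where j: "j < length (conj_part p)" "conj_part p ! j = 0"
      by (auto simp: in_set_conv_nth)
    then have ne: "p \<noteq> []" and jl: "j < p ! 0"
      using partition_hd[OF assms] by (auto simp: conj_len split: if_splits)
    have "p ! 0 \<in> set (filter (\<lambda>x. j < x) p)"
      using ne jl by auto
    then have "length (filter (\<lambda>x. j < x) p) > 0"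
      by (metis length_pos_if_in_set)
    then show False using j conj_nth by simp
  qed
  then show ?thesis using sorted by (simp add: is_partition_def)
qed

lemma conj_conj:
  assumes "is_partition p"
  shows "conj_part (conj_part p) = p"
proof (cases "p = []")
  case True then show ?thesis by (simp add: conj_part_def)
next
  case False
  let ?q = "conj_part p"
  have sorted: "sorted_wrt (\<ge>) p" using assms by (simp add: is_partition_def)
  have lq: "length ?q = p ! 0" using False partition_hd[OF assms False] by (simp add: conj_len)
  have p0: "p ! 0 > 0" using partition_pos[OF assms] False by simp
  have qne: "?q \<noteq> []" using lq p0 by auto
  have "hd ?q = ?q ! 0" using qne by (simp add: hd_conv_nth)
  also have "\<dots> = length (filter (\<lambda>x. 0 < x) p)" using lq p0 by (simp add: conj_nth)
  also have "filter (\<lambda>x. 0 < x) p = p"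
    using assms by (auto simp: is_partition_def filter_id_conv) (metis not_gr0)
  finally have hq: "hd ?q = length p" .
  show ?thesis
  proof (rule nth_equalityI)
    show "length (conj_part ?q) = length p" using qne hq by (simp add: conj_len)
  next
    fix k assume "k < length (conj_part ?q)"
    then have k: "k < length p" using qne hq by (simp add: conj_len)
    have "conj_part ?q ! k = length (filter (\<lambda>x. k < x) ?q)"
      using k qne hq by (simp add: conj_nth conj_len)
    also have "\<dots> = card {j. j < length ?q \<and> k < ?q ! j}"
      by (simp add: length_filter_conv_card)
    also have "{j. j < length ?q \<and> k < ?q ! j} = {j. j < p ! 0 \<and> j < p ! k}"
    proof (intro Collect_cong)
      fix j
      show "(j < length ?q \<and> k < ?q ! j) = (j < p ! 0 \<and> j < p ! k)"
        using filter_len_key[OF sorted k, of j] lq by (auto simp: conj_nth)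
    qed
    also have "{j. j < p ! 0 \<and> j < p ! k} = {..< p ! k}"
      using partition_le_hd[OF assms k] by auto
    finally show "conj_part ?q ! k = p ! k" by simp
  qed
qed

lemma conj_contains22:
  assumes "is_partition p" "length p \<ge> 2" "p ! 1 \<ge> 2"
  shows "contains22 (conj_part p)"
proof -
  have ne: "p \<noteq> []" using assms by auto
  have sorted: "sorted_wrt (\<ge>) p" using assms by (simp add: is_partition_def)
  have p01: "p ! 1 \<le> p ! 0" using partition_le_hd[OF assms(1)] assms(2) by simp
  have lq: "length (conj_part p) = p ! 0" using ne partition_hd[OF assms(1) ne] by (simp add: conj_len)
  have "conj_part p ! 0 = length (filter (\<lambda>x. 0 < x) p)" using lq assms p01 by (simp add: conj_nth)
  also have "filter (\<lambda>x. 0 < x) p = p"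
    using assms by (auto simp: is_partition_def filter_id_conv) (metis not_gr0)
  finally have q0: "conj_part p ! 0 = length p" .
  have "conj_part p ! 1 = length (filter (\<lambda>x. 1 < x) p)" using lq assms p01 by (simp add: conj_nth)
  moreover have "1 < length (filter (\<lambda>x. 1 < x) p)"
    using filter_len_key[OF sorted, of 1 1] assms by simp
  ultimately show ?thesis using q0 lq assms p01 by (simp add: contains22_def)
qed

lemma contains22_conj:
  assumes "is_partition p" "contains22 p"
  shows "length (conj_part p) \<ge> 2 \<and> conj_part p ! 0 \<ge> 2 \<and> conj_part p ! 1 \<ge> 2"
  using conj_contains22[OF assms(1)] assms(2) by (simp add: contains22_def)

definition Dm :: "(int \<Rightarrow> 'a::comm_ring_1) \<Rightarrow> nat list \<Rightarrow> 'a" where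
  "Dm f mu = (\<Sum>\<sigma> | \<sigma> permutes {..<length mu}.
        of_int (sign \<sigma>) * (\<Prod>i<length mu. f (int (mu ! i) - int i + int (\<sigma> i))))"

lemma schur_Dm: "schur p = Dm elem (conj_part p)"
  by (simp add: schur_def Dm_def Let_def)

definition E :: "int \<Rightarrow> zab" where
  "E k = (if k < 0 then 0 else if k = 0 then 1 else xab * vb ^ (nat k - 1))"

lemma phi_elem: "phi (elem k) = E k"
  by (simp add: phi_def elem_def E_def lam_Suc_xab del: lam.simps)

lemma phi_Dm: "phi (Dm elem mu) = Dm E mu"
  unfolding Dm_def phi_def
  by (simp add: eval_sym_sum eval_sym_mult eval_sym_prod phi_elem[unfolded phi_def] del: lam.simps)

lemma Dm_E_zero:
  assumes "length mu \<ge> 2" "mu ! 0 \<ge> 2" "mu ! 1 \<ge> 2"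
  shows "Dm E mu = 0"
proof -
  let ?m = "length mu"
  let ?P = "{\<sigma>. \<sigma> permutes {..<?m}}"
  let ?t = "Transposition.transpose (0::nat) 1"
  define F where "F \<sigma> = of_int (sign \<sigma>) * (\<Prod>i<?m. E (int (mu ! i) - int i + int (\<sigma> i)))" for \<sigma>
  have tp: "?t permutes {..<?m}" using assms by (intro permutes_swap_id) auto
  have split: "(\<Prod>i<?m. h i) = h 0 * h 1 * (\<Prod>i\<in>{2..<?m}. h i)" for h :: "nat \<Rightarrow> zab"
  proof -
    have "{..<?m} = insert 0 (insert 1 {2..<?m})" using assms by auto
    then show ?thesis by (simp add: mult.assoc)
  qed
  have E0: "E (int (mu ! 0) + int s) = xab * vb ^ (mu ! 0 + s - 1)" for s
    using assms by (simp add: E_def nat_add_distrib)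
  have E1: "E (int (mu ! 1) - 1 + int s) = xab * vb ^ (mu ! 1 + s - 2)" for s
  proof -
    have "nat (int (mu ! 1) - 1 + int s) - 1 = mu ! 1 + s - 2" using assms by auto
    then show ?thesis using assms by (simp add: E_def)
  qed
  have neg: "F (\<sigma> \<circ> ?t) = - F \<sigma>" if s: "\<sigma> permutes {..<?m}" for \<sigma>
  proof -
    have sg: "sign (\<sigma> \<circ> ?t) = - sign \<sigma>"
    proof -
      have "permutation \<sigma>" by (rule permutes_imp_permutation[OF _ s]) simp
      then show ?thesis by (simp add: sign_compose permutation_swap_id sign_swap_id)
    qed
    have rest: "(\<Prod>i\<in>{2..<?m}. E (int (mu ! i) - int i + int ((\<sigma> \<circ> ?t) i)))
        = (\<Prod>i\<in>{2..<?m}. E (int (mu ! i) - int i + int (\<sigma> i)))"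
      by (rule prod.cong) auto
    have sw: "E (int (mu ! 0) + int (\<sigma> 1)) * E (int (mu ! 1) - 1 + int (\<sigma> 0))
        = E (int (mu ! 0) + int (\<sigma> 0)) * E (int (mu ! 1) - 1 + int (\<sigma> 1))"
    proof -
      have "mu ! 0 + \<sigma> 1 - 1 + (mu ! 1 + \<sigma> 0 - 2) = mu ! 0 + \<sigma> 0 - 1 + (mu ! 1 + \<sigma> 1 - 2)"
        using assms by simp
      then show ?thesis unfolding E0 E1 by (simp add: algebra_simps flip: power_add)
    qed
    show ?thesis
      unfolding F_def split[where h="\<lambda>i. E (int (mu ! i) - int i + int ((\<sigma> \<circ> ?t) i))"]
        split[where h="\<lambda>i. E (int (mu ! i) - int i + int (\<sigma> i))"] rest sg
      using sw by (simp add: algebra_simps)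
  qed
  have "Dm E mu = sum F ?P" by (simp add: Dm_def F_def)
  also have "\<dots> = sum (\<lambda>\<sigma>. F (\<sigma> \<circ> ?t)) ?P" by (rule sum_permutations_compose_right[OF tp])
  also have "\<dots> = sum (\<lambda>\<sigma>. - F \<sigma>) ?P" by (rule sum.cong[OF refl], rule neg, simp)
  also have "\<dots> = - sum F ?P" by (simp add: sum_negf)
  finally have "sum F ?P = - sum F ?P" by (simp add: Dm_def F_def)
  then have "sum F ?P = 0" by (simp add: eq_neg_iff_add_eq_0 flip: mult_2)
  then show ?thesis by (simp add: Dm_def F_def)
qed

lemma sum_card_le:
  fixes S :: "nat set"
  assumes "finite S"
  shows "(\<Sum>i<card S. i) \<le> (\<Sum>i\<in>S. i)"
  using assms
proof (induction "card S" arbitrary: S)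
  case 0 then show ?case by simp
next
  case (Suc n S)
  then have ne: "S \<noteq> {}" by auto
  define M where "M = Max S"
  have MS: "M \<in> S" using Suc.prems ne by (simp add: M_def)
  have "S \<subseteq> {..M}" using Suc.prems by (auto simp: M_def)
  then have "card S \<le> Suc M" using card_mono[of "{..M}" S] by simp
  then have nM: "n \<le> M" using Suc.hyps(2) by simp
  have cS': "card (S - {M}) = n" using Suc.hyps(2) MS Suc.prems by simp
  have IH: "(\<Sum>i<n. i) \<le> (\<Sum>i\<in>S - {M}. i)"
    using Suc.hyps(1)[of "S - {M}"] cS' Suc.prems by simp
  have "(\<Sum>i\<in>S. i) = M + (\<Sum>i\<in>S - {M}. i)"
    using Suc.prems MS by (simp add: sum.remove)
  moreover have "(\<Sum>i<card S. i) = n + (\<Sum>i<n. i)"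
    using Suc.hyps(2)[symmetric] by simp
  ultimately show ?case using IH nM by linarith
qed

lemma sum_inj_ge:
  fixes f :: "nat \<Rightarrow> nat"
  assumes "inj_on f {..<k}"
  shows "(\<Sum>i<k. i) \<le> (\<Sum>i<k. f i)"
proof -
  have "card (f ` {..<k}) = k" using assms by (simp add: card_image)
  then have "(\<Sum>i<k. i) \<le> (\<Sum>i\<in>f ` {..<k}. i)" using sum_card_le[of "f ` {..<k}"] by simp
  also have "\<dots> = (\<Sum>i<k. f i)" using assms by (simp add: sum.reindex)
  finally show ?thesis .
qed

lemma perm_sum_eq:
  assumes "\<sigma> permutes {..<m}"
  shows "(\<Sum>i<m. \<sigma> i) = (\<Sum>i<m. i)"
  using sum.reindex_bij_betw[OF permutes_imp_bij[OF assms], of "\<lambda>i. i"] by simp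

lemma abel_ineq:
  fixes g d :: "nat \<Rightarrow> int"
  assumes dec: "\<And>i j. i \<le> j \<Longrightarrow> g j \<le> g i"
    and pre: "\<And>k. k \<le> m \<Longrightarrow> 0 \<le> (\<Sum>i<k. d i)"
  shows "k \<le> m \<Longrightarrow> g k * (\<Sum>i<k. d i) \<le> (\<Sum>i<k. g i * d i)"
proof (induction k)
  case 0 then show ?case by simp
next
  case (Suc k)
  have "g (Suc k) * (\<Sum>i<Suc k. d i) \<le> g k * (\<Sum>i<Suc k. d i)"
    using dec[of k "Suc k"] pre[OF Suc.prems] by (intro mult_right_mono) auto
  also have "\<dots> = g k * (\<Sum>i<k. d i) + g k * d k" by (simp add: algebra_simps)
  also have "\<dots> \<le> (\<Sum>i<k. g i * d i) + g k * d k" using Suc by simp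
  also have "\<dots> = (\<Sum>i<Suc k. g i * d i)" by simp
  finally show ?case .
qed

lemma sq_increase:
  fixes mu :: "nat list"
  assumes sorted: "sorted_wrt (\<ge>) mu" and s: "\<sigma> permutes {..<length mu}" and nid: "\<sigma> \<noteq> id"
  shows "(\<Sum>i<length mu. (int (mu ! i))^2) < (\<Sum>i<length mu. (int (mu ! i) - int i + int (\<sigma> i))^2)"
proof -
  let ?m = "length mu"
  define d where "d i = int (\<sigma> i) - int i" for i
  define g where "g i = (if i < ?m then int (mu ! i) else 0)" for i
  have dec: "g j \<le> g i" if "i \<le> j" for i j
    using that sorted by (auto simp: g_def sorted_wrt_iff_nth_less le_less)
  have pre: "0 \<le> (\<Sum>i<k. d i)" if "k \<le> ?m" for k
  proof -
    have "inj_on \<sigma> {..<k}" using permutes_inj[OF s] by (rule inj_on_subset) simp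
    then have "(\<Sum>i<k. i) \<le> (\<Sum>i<k. \<sigma> i)" by (rule sum_inj_ge)
    moreover have "(\<Sum>i<k. d i) = int (\<Sum>i<k. \<sigma> i) - int (\<Sum>i<k. i)"
      by (simp add: d_def sum_subtractf of_nat_sum)
    ultimately show ?thesis by linarith
  qed
  have sumd: "(\<Sum>i<?m. d i) = 0"
    using perm_sum_eq[OF s] by (simp add: d_def sum_subtractf flip: of_nat_sum)
  have "g ?m * (\<Sum>i<?m. d i) \<le> (\<Sum>i<?m. g i * d i)"
    by (rule abel_ineq[where g=g and d=d and m="?m"]) (auto intro: dec pre)
  then have cross: "0 \<le> (\<Sum>i<?m. int (mu ! i) * d i)" by (simp add: g_def sumd)
  obtain j where j: "j < ?m" "\<sigma> j \<noteq> j"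
  proof (rule ccontr)
    assume "\<not> thesis"
    then have "\<forall>j<?m. \<sigma> j = j" using that by blast
    moreover have "\<forall>j. j \<ge> ?m \<longrightarrow> \<sigma> j = j" using permutes_not_in[OF s] by auto
    ultimately have "\<sigma> = id" by (auto simp: fun_eq_iff) (metis not_le)
    then show False using nid by simp
  qed
  have "0 < (d j)^2" using j by (simp add: d_def)
  also have "(d j)^2 \<le> (\<Sum>i<?m. (d i)^2)"
    using j by (intro member_le_sum) auto
  finally have sq: "0 < (\<Sum>i<?m. (d i)^2)" .
  have "(\<Sum>i<?m. (int (mu ! i) - int i + int (\<sigma> i))^2) = (\<Sum>i<?m. (int (mu ! i) + d i)^2)"
    by (simp add: d_def algebra_simps)
  also have "\<dots> = (\<Sum>i<?m. (int (mu ! i))^2) + 2 * (\<Sum>i<?m. int (mu ! i) * d i) + (\<Sum>i<?m. (d i)^2)"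
    by (simp add: power2_sum sum.distrib sum_distrib_left algebra_simps)
  finally show ?thesis using cross sq by linarith
qed

lemma sum_shift_eq:
  assumes "\<sigma> permutes {..<length mu}"
  shows "(\<Sum>i<length mu. (int (mu ! i) - int i + int (\<sigma> i))) = (\<Sum>i<length mu. int (mu ! i))"
  using perm_sum_eq[OF assms] by (simp add: sum.distrib sum_subtractf flip: of_nat_sum)

definition zspan :: "('i \<Rightarrow> 'a::comm_ring_1) \<Rightarrow> 'i set \<Rightarrow> 'a set" where
  "zspan g A = {(\<Sum>i\<in>S. of_int (c i) * g i) | S c. finite S \<and> S \<subseteq> A}"

lemma zspan_0: "0 \<in> zspan g A"
  unfolding zspan_def by (rule CollectI, rule exI[of _ "{}"]) auto

lemma zspan_gen: "i \<in> A \<Longrightarrow> g i \<in> zspan g A"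
  unfolding zspan_def
  by (rule CollectI, rule exI[of _ "{i}"], rule exI[of _ "\<lambda>_. 1"]) auto

lemma zspan_ext:
  assumes "finite S" "S \<subseteq> T" "finite T"
  shows "(\<Sum>i\<in>S. of_int (c i) * g i) = (\<Sum>i\<in>T. of_int (if i \<in> S then c i else 0) * g i)"
proof -
  have "(\<Sum>i\<in>T. of_int (if i \<in> S then c i else 0) * g i) = (\<Sum>i\<in>S. of_int (if i \<in> S then c i else 0) * g i)"
    by (rule sum.mono_neutral_right) (use assms in auto)
  also have "\<dots> = (\<Sum>i\<in>S. of_int (c i) * g i)" by simp
  finally show ?thesis by simp
qed

lemma zspan_add:
  assumes "x \<in> zspan g A" "y \<in> zspan g A"
  shows "x + y \<in> zspan g A"
proof -
  obtain S c where S: "finite S" "S \<subseteq> A" "x = (\<Sum>i\<in>S. of_int (c i) * g i)"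
    using assms(1) unfolding zspan_def by blast
  obtain T d where T: "finite T" "T \<subseteq> A" "y = (\<Sum>i\<in>T. of_int (d i) * g i)"
    using assms(2) unfolding zspan_def by blast
  define e where "e i = (if i \<in> S then c i else 0) + (if i \<in> T then d i else 0)" for i
  have e1: "x = (\<Sum>i\<in>S \<union> T. of_int (if i \<in> S then c i else 0) * g i)"
    unfolding S(3) by (rule zspan_ext) (use S T in auto)
  have e2: "y = (\<Sum>i\<in>S \<union> T. of_int (if i \<in> T then d i else 0) * g i)"
    unfolding T(3) by (rule zspan_ext) (use S T in auto)
  have "x + y = (\<Sum>i\<in>S \<union> T. of_int (e i) * g i)"
    unfolding e1 e2 by (simp add: e_def sum.distrib distrib_right)
  then show ?thesis unfolding zspan_def using S T
    by (intro CollectI exI[of _ "S \<union> T"] exI[of _ e]) simp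
qed

lemma zspan_smult:
  assumes "x \<in> zspan g A"
  shows "of_int z * x \<in> zspan g A"
proof -
  obtain S c where S: "finite S" "S \<subseteq> A" "x = (\<Sum>i\<in>S. of_int (c i) * g i)"
    using assms(1) unfolding zspan_def by blast
  have "of_int z * x = (\<Sum>i\<in>S. of_int (z * c i) * g i)"
    unfolding S(3) by (simp add: sum_distrib_left mult.assoc)
  then show ?thesis unfolding zspan_def using S
    by (intro CollectI exI[of _ S] exI[of _ "\<lambda>i. z * c i"]) simp
qed

lemma zspan_uminus: "x \<in> zspan g A \<Longrightarrow> - x \<in> zspan g A"
  using zspan_smult[of x g A "-1"] by simp

lemma zspan_diff: "x \<in> zspan g A \<Longrightarrow> y \<in> zspan g A \<Longrightarrow> x - y \<in> zspan g A"
  using zspan_add[of x g A "- y"] zspan_uminus[of y g A] by simp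

lemma I22_zspan: "I22 = zspan schur {p. is_partition p \<and> contains22 p}"
  unfolding I22_def zspan_def by (simp add: subset_iff Ball_def)

definition gen :: "nat \<times> nat \<Rightarrow> symfun" where
  "gen k = lvar 0 ^ fst k * elem (int (snd k))"

definition K :: "(nat \<times> nat) set" where
  "K = {k. 1 \<le> snd k} \<union> {(0, 0)}"

definition Good :: "symfun set" where
  "Good = {a + b | a b. a \<in> I22 \<and> b \<in> zspan gen K}"

lemma Good_add:
  assumes "x \<in> Good" "y \<in> Good" shows "x + y \<in> Good"
proof -
  obtain a b where ab: "x = a + b" "a \<in> I22" "b \<in> zspan gen K" using assms(1) unfolding Good_def by blast
  obtain a' b' where ab': "y = a' + b'" "a' \<in> I22" "b' \<in> zspan gen K" using assms(2) unfolding Good_def by blast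
  have "x + y = (a + a') + (b + b')" using ab ab' by (simp add: algebra_simps)
  moreover have "a + a' \<in> I22" using ab(2) ab'(2) unfolding I22_zspan by (rule zspan_add)
  moreover have "b + b' \<in> zspan gen K" using ab ab' by (intro zspan_add)
  ultimately show ?thesis unfolding Good_def by blast
qed

lemma Good_smult:
  assumes "x \<in> Good" shows "of_int z * x \<in> Good"
proof -
  obtain a b where ab: "x = a + b" "a \<in> I22" "b \<in> zspan gen K" using assms(1) unfolding Good_def by blast
  have "of_int z * x = of_int z * a + of_int z * b" using ab by (simp add: algebra_simps)
  moreover have "of_int z * a \<in> I22" using ab(2) unfolding I22_zspan by (rule zspan_smult)
  moreover have "of_int z * b \<in> zspan gen K" using ab(3) by (rule zspan_smult)
  ultimately show ?thesis unfolding Good_def by blast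
qed

lemma Good_diff: "x \<in> Good \<Longrightarrow> y \<in> Good \<Longrightarrow> x - y \<in> Good"
  using Good_add[of x "of_int (-1) * y"] Good_smult[of y "-1"] by simp

lemma Good_0: "0 \<in> Good"
  unfolding Good_def using zspan_0[of gen K] zspan_0[of schur "{p. is_partition p \<and> contains22 p}"]
  unfolding I22_zspan[symmetric] by force

lemma Good_I22: "x \<in> I22 \<Longrightarrow> x \<in> Good"
  unfolding Good_def using zspan_0[of gen K] by force

lemma Good_gen: "k \<in> K \<Longrightarrow> gen k \<in> Good"
  unfolding Good_def I22_zspan using zspan_0[of schur] zspan_gen[of k K gen] by force

lemma Good_sum: "(\<And>a. a \<in> S \<Longrightarrow> f a \<in> Good) \<Longrightarrow> sum f S \<in> Good"
  by (induction S rule: infinite_finite_induct) (auto intro: Good_add Good_0)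

definition P :: "nat list \<Rightarrow> symfun" where
  "P xs = prod_list (map (\<lambda>k. elem (int k)) xs)"

definition sqs :: "nat list \<Rightarrow> nat" where
  "sqs xs = sum_list (map (\<lambda>k. k ^ 2) xs)"

lemma P_mset: "mset xs = mset ys \<Longrightarrow> P xs = P ys"
  unfolding P_def prod_mset_prod_list[symmetric] by simp

lemma sum_mset_eq: "mset xs = mset ys \<Longrightarrow> sum_list xs = sum_list (ys :: nat list)"
  unfolding sum_mset_sum_list[symmetric] by simp

lemma sqs_mset: "mset xs = mset ys \<Longrightarrow> sqs xs = sqs ys"
  unfolding sqs_def sum_mset_sum_list[symmetric] by simp

lemma P_filter: "P (filter (\<lambda>k. 0 < k) xs) = P xs"
  by (induction xs) (auto simp: P_def elem_def)

lemma sum_filter: "sum_list (filter (\<lambda>k. 0 < k) xs) = sum_list (xs :: nat list)"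
  by (induction xs) auto

lemma sqs_filter: "sqs (filter (\<lambda>k. 0 < k) xs) = sqs xs"
  by (induction xs) (auto simp: sqs_def)

lemma sqs_le: "sqs xs \<le> (sum_list xs)^2"
proof (induction xs)
  case Nil then show ?case by (simp add: sqs_def)
next
  case (Cons a xs)
  have "sqs (a # xs) = a^2 + sqs xs" by (simp add: sqs_def)
  also have "\<dots> \<le> a^2 + (sum_list xs)^2" using Cons by simp
  also have "\<dots> \<le> (a + sum_list xs)^2" by (simp add: power2_sum)
  finally show ?case by simp
qed

lemma prod_list_upt: "prod_list (map g [0..<n]) = (\<Prod>i<n. g i)"
  by (induction n) (auto simp: mult.commute)

lemma sum_list_upt': "sum_list (map g [0..<n]) = (\<Sum>i<n. g i)"
  by (induction n) auto

lemma P_nth: "P xs = (\<Prod>i<length xs. elem (int (xs ! i)))"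
proof -
  have "map (\<lambda>k. elem (int k)) xs = map (\<lambda>i. elem (int (xs ! i))) [0..<length xs]"
    by (rule nth_equalityI) auto
  then show ?thesis unfolding P_def by (simp add: prod_list_upt)
qed

lemma sum_nth: "sum_list xs = (\<Sum>i<length xs. xs ! i)"
  using sum_list_sum_nth[of xs] by (simp add: atLeast0LessThan)

lemma sqs_nth: "sqs xs = (\<Sum>i<length xs. (xs ! i)^2)"
  unfolding sqs_def using sum_list_sum_nth[of "map (\<lambda>k. k^2) xs"] by (simp add: atLeast0LessThan)

lemma gen_00: "gen (0, 0) = 1"
  by (simp add: gen_def elem_def)

lemma hook_shape:
  assumes part: "is_partition mu" and ne: "mu \<noteq> []" and nc: "\<not> (2 \<le> length mu \<and> 2 \<le> mu ! 1)"
  shows "mu = mu ! 0 # replicate (length mu - 1) 1"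
proof (rule nth_equalityI)
  show "length mu = length (mu ! 0 # replicate (length mu - 1) 1)" using ne by simp
next
  fix i assume i: "i < length mu"
  show "mu ! i = (mu ! 0 # replicate (length mu - 1) 1) ! i"
  proof (cases i)
    case 0 then show ?thesis by simp
  next
    case (Suc j)
    then have l2: "2 \<le> length mu" using i by simp
    then have m1: "mu ! 1 \<le> 1" using nc by simp
    have "mu ! i \<le> mu ! 1"
      using part i Suc unfolding is_partition_def
      by (cases j) (auto simp: sorted_wrt_iff_nth_less)
    moreover have "0 < mu ! i" using partition_pos[OF part i] .
    ultimately have "mu ! i = 1" using m1 by simp
    then show ?thesis using Suc i by simp
  qed
qed

lemma term_good:
  assumes part: "is_partition mu" and s: "\<sigma> permutes {..<length mu}" and nid: "\<sigma> \<noteq> id"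
    and IH: "\<And>ys. (sum_list ys)^2 - sqs ys < (sum_list mu)^2 - sqs mu \<Longrightarrow> P ys \<in> Good"
  shows "(\<Prod>i<length mu. elem (int (mu ! i) - int i + int (\<sigma> i))) \<in> Good"
proof (cases "\<exists>i<length mu. int (mu ! i) - int i + int (\<sigma> i) < 0")
  case True
  then obtain i where i: "i < length mu" "int (mu ! i) - int i + int (\<sigma> i) < 0" by blast
  have z: "(\<Prod>i<length mu. elem (int (mu ! i) - int i + int (\<sigma> i))) = 0"
    apply (rule prod_zero)
     apply simp
    apply (rule bexI[of _ i])
    using i by (auto simp: elem_def)
  show ?thesis unfolding z by (rule Good_0)
next
  case False
  let ?m = "length mu"
  let ?a = "\<lambda>i. int (mu ! i) - int i + int (\<sigma> i)"
  define nu where "nu = map (\<lambda>i. nat (?a i)) [0..<?m]"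
  have nn: "0 \<le> ?a i" if "i < ?m" for i
  proof (rule ccontr)
    assume "\<not> 0 \<le> ?a i"
    then have "?a i < 0" by simp
    then show False using False that by blast
  qed
  have Pnu: "P nu = (\<Prod>i<?m. elem (?a i))"
    unfolding P_def nu_def map_map prod_list_upt
    by (rule prod.cong) (auto simp: nn)
  have "int (sum_list nu) = (\<Sum>i<?m. int (nat (?a i)))"
    unfolding nu_def sum_list_upt' by (simp add: of_nat_sum)
  also have "\<dots> = (\<Sum>i<?m. ?a i)" by (rule sum.cong) (auto simp: nn)
  also have "\<dots> = (\<Sum>i<?m. int (mu ! i))" by (rule sum_shift_eq[OF s])
  also have "\<dots> = int (sum_list mu)" by (simp add: sum_nth of_nat_sum)
  finally have snu: "sum_list nu = sum_list mu" by simp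
  have "int (sqs mu) = (\<Sum>i<?m. (int (mu ! i))^2)" by (simp add: sqs_nth of_nat_sum)
  also have "\<dots> < (\<Sum>i<?m. (?a i)^2)"
    using sq_increase[OF _ s nid] part by (simp add: is_partition_def)
  also have "\<dots> = (\<Sum>i<?m. (int (nat (?a i)))^2)" by (rule sum.cong) (auto simp: nn)
  also have "\<dots> = int (sqs nu)" unfolding nu_def sqs_def sum_list_upt' map_map
    by (simp add: of_nat_sum o_def)
  finally have qnu: "sqs mu < sqs nu" by simp
  have "sqs nu \<le> (sum_list nu)^2" by (rule sqs_le)
  then have "(sum_list nu)^2 - sqs nu < (sum_list mu)^2 - sqs mu" using snu qnu by simp
  then have "P nu \<in> Good" by (rule IH)
  then show ?thesis using Pnu by simp
qed

lemma main_good: "P xs \<in> Good"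
proof (induction "(sum_list xs)^2 - sqs xs" arbitrary: xs rule: less_induct)
  case less
  define mu where "mu = filter (\<lambda>k. 0 < k) (rev (sort xs))"
  have ms: "mset (rev (sort xs)) = mset xs" by simp
  have Pmu: "P mu = P xs" unfolding mu_def P_filter using P_mset[OF ms] .
  have smu: "sum_list mu = sum_list xs" unfolding mu_def sum_filter using sum_mset_eq[OF ms] .
  have qmu: "sqs mu = sqs xs" unfolding mu_def sqs_filter using sqs_mset[OF ms] .
  have part: "is_partition mu"
  proof -
    have "sorted_wrt (\<ge>) (rev (sort xs))" by (simp add: sorted_wrt_rev)
    then have "sorted_wrt (\<ge>) mu" unfolding mu_def by (rule sorted_wrt_filter)
    moreover have "0 \<notin> set mu" by (simp add: mu_def)
    ultimately show ?thesis by (simp add: is_partition_def)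
  qed
  have IH: "P ys \<in> Good" if "(sum_list ys)^2 - sqs ys < (sum_list mu)^2 - sqs mu" for ys
    using less that smu qmu by simp
  let ?m = "length mu"
  show ?case
  proof (cases "2 \<le> ?m \<and> 2 \<le> mu ! 1")
    case True
    define T where "T \<sigma> = (\<Prod>i<?m. elem (int (mu ! i) - int i + int (\<sigma> i)))" for \<sigma> :: "nat \<Rightarrow> nat"
    let ?Perm = "{\<sigma>. \<sigma> permutes {..<?m}}"
    have fin: "finite ?Perm" by (rule finite_permutations) simp
    have idP: "id \<in> ?Perm" by (simp add: permutes_id)
    have "Dm elem mu = (\<Sum>\<sigma>\<in>?Perm. of_int (sign \<sigma>) * T \<sigma>)" by (simp add: Dm_def T_def)
    also have "\<dots> = of_int (sign (id :: nat \<Rightarrow> nat)) * T id + (\<Sum>\<sigma>\<in>?Perm - {id}. of_int (sign \<sigma>) * T \<sigma>)"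
      by (rule sum.remove[OF fin idP])
    also have "of_int (sign (id :: nat \<Rightarrow> nat)) * T id = P mu" by (simp add: T_def P_nth)
    finally have deq: "Dm elem mu = P mu + (\<Sum>\<sigma>\<in>?Perm - {id}. of_int (sign \<sigma>) * T \<sigma>)" .
    have eq: "P mu = Dm elem mu - (\<Sum>\<sigma>\<in>?Perm - {id}. of_int (sign \<sigma>) * T \<sigma>)"
      unfolding deq by (simp only: add_diff_cancel_right')
    have "Dm elem mu = schur (conj_part mu)" using conj_conj[OF part] by (simp add: schur_Dm)
    moreover have "schur (conj_part mu) \<in> I22"
      unfolding I22_zspan
      by (rule zspan_gen) (use conj_partition[OF part] conj_contains22[OF part] True in auto)
    ultimately have D: "Dm elem mu \<in> Good" by (simp add: Good_I22)
    have "(\<Sum>\<sigma>\<in>?Perm - {id}. of_int (sign \<sigma>) * T \<sigma>) \<in> Good"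
    proof (rule Good_sum)
      fix \<sigma> assume "\<sigma> \<in> ?Perm - {id}"
      then have s: "\<sigma> permutes {..<?m}" and nid: "\<sigma> \<noteq> id" by auto
      have "T \<sigma> \<in> Good" unfolding T_def by (rule term_good[OF part s nid IH])
      then show "of_int (sign \<sigma>) * T \<sigma> \<in> Good" by (rule Good_smult)
    qed
    then have "P mu \<in> Good" unfolding eq using D by (intro Good_diff)
    then show ?thesis using Pmu by simp
  next
    case False
    show ?thesis
    proof (cases "mu = []")
      case True
      then have "P xs = gen (0, 0)" using Pmu by (simp add: P_def gen_00)
      moreover have "(0, 0) \<in> K" by (simp add: K_def)
      ultimately show ?thesis using Good_gen by simp
    next
      case ne: False
      have hs: "mu = mu ! 0 # replicate (?m - 1) 1" by (rule hook_shape[OF part ne False])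
      have "P mu = elem (int (mu ! 0)) * elem 1 ^ (?m - 1)"
        by (subst hs) (simp add: P_def)
      also have "\<dots> = gen (?m - 1, mu ! 0)" by (simp add: gen_def elem_def mult.commute)
      finally have "P xs = gen (?m - 1, mu ! 0)" using Pmu by simp
      moreover have "(?m - 1, mu ! 0) \<in> K"
      proof -
        have "0 < mu ! 0" using partition_pos[OF part, of 0] ne by simp
        then show ?thesis by (simp add: K_def)
      qed
      ultimately show ?thesis using Good_gen by simp
    qed
  qed
qed

locale hm =
  fixes f :: "'a::comm_ring_1 \<Rightarrow> 'b::comm_ring_1"
  assumes f0: "f 0 = 0" and f1: "f 1 = 1" and fadd: "\<And>x y. f (x + y) = f x + f y"
    and fmult: "\<And>x y. f (x * y) = f x * f y"
begin

lemma fsum: "f (sum g A) = (\<Sum>a\<in>A. f (g a))"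
  by (induction A rule: infinite_finite_induct) (auto simp: f0 fadd)

lemma map_add: "map_poly f (p + q) = map_poly f p + map_poly f q"
  by (rule poly_eqI) (simp add: coeff_map_poly f0 fadd)

lemma map_mult: "map_poly f (p * q) = map_poly f p * map_poly f q"
  by (rule poly_eqI) (simp add: coeff_map_poly f0 coeff_mult fsum fmult)

lemma map_one: "map_poly f 1 = 1"
  by (simp add: f1)

end

lemma hm_emb: "hm (\<lambda>z::int. [:z:])"
  by unfold_locales auto

lemma hm_poly: "hm (\<lambda>p. poly p x)"
  by unfold_locales auto

lemma hm_pcomp: "hm (\<lambda>p. pcompose p r)"
  by unfold_locales (auto simp: pcompose_add pcompose_mult pcompose_1)

lemma hm_comp: "hm f \<Longrightarrow> hm g \<Longrightarrow> hm (g \<circ> f)"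
  unfolding hm_def by auto

lemma hm_map: "hm f \<Longrightarrow> hm (map_poly f)"
  by (rule hm.intro) (auto simp: hm.map_add hm.map_mult hm.map_one)

lemma map_poly_const' [simp]: "f 0 = 0 \<Longrightarrow> map_poly f [:c:] = [:f c:]"
  by (simp add: map_poly_pCons)

definition Fc :: "int poly \<Rightarrow> zab" where
  "Fc c = pcompose (map_poly (\<lambda>z. [:z:]) c) (va - vb)"

definition psi :: "zab \<Rightarrow> zab" where
  "psi q = poly (map_poly Fc q) vb"

lemma hm_Fc: "hm Fc"
proof -
  have "hm ((\<lambda>p. pcompose p (va - vb)) \<circ> map_poly (\<lambda>z::int. [:z:]))"
    by (rule hm_comp[OF hm_map[OF hm_emb] hm_pcomp])
  moreover have "(\<lambda>p. pcompose p (va - vb)) \<circ> map_poly (\<lambda>z::int. [:z:]) = Fc"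
    by (rule ext) (simp add: Fc_def)
  ultimately show ?thesis by simp
qed

lemma hm_psi: "hm psi"
proof -
  have "hm ((\<lambda>p. poly p vb) \<circ> map_poly Fc)"
    by (rule hm_comp[OF hm_map[OF hm_Fc] hm_poly])
  moreover have "(\<lambda>p. poly p vb) \<circ> map_poly Fc = psi"
    by (rule ext) (simp add: psi_def)
  ultimately show ?thesis by simp
qed

lemma Fc_0 [simp]: "Fc 0 = 0" by (simp add: Fc_def)
lemma Fc_const [simp]: "Fc [:z:] = [:[:z:]:]" by (simp add: Fc_def)
lemma Fc_x [simp]: "Fc [:0, 1:] = va - vb"
  by (simp add: Fc_def map_poly_pCons pcompose_pCons pcompose_1 one_pCons[symmetric])
lemma Fc_1 [simp]: "Fc 1 = 1" by (simp add: Fc_def pcompose_1)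

lemma psi_add: "psi (x + y) = psi x + psi y" using hm_psi by (simp add: hm_def)
lemma psi_mult: "psi (x * y) = psi x * psi y" using hm_psi by (simp add: hm_def)
lemma psi_0: "psi 0 = 0" using hm_psi by (simp add: hm_def)
lemma psi_1: "psi 1 = 1" using hm_psi by (simp add: hm_def)
lemma psi_sum: "psi (sum g A) = (\<Sum>a\<in>A. psi (g a))" using hm.fsum[OF hm_psi] .
lemma psi_power: "psi (x ^ n) = psi x ^ n" by (induction n) (auto simp: psi_1 psi_mult)

lemma psi_of_int: "psi (of_int z) = of_int z"
proof -
  have "of_int z = ([:[:z:]:] :: zab)" by (simp add: of_int_poly)
  then show ?thesis by (simp add: psi_def)
qed

lemma psi_va: "psi va = va - vb"
  by (simp add: psi_def va_def)

lemma psi_vb: "psi vb = vb"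
  by (simp add: psi_def vb_def map_poly_pCons)

lemma psi_xab: "psi xab = va"
  by (simp add: xab_def psi_add psi_va psi_vb)

lemma phi_diff: "phi (p - q) = phi p - phi q" by (simp add: phi_def eval_sym_diff)
lemma phi_add: "phi (p + q) = phi p + phi q" by (simp add: phi_def eval_sym_add)
lemma phi_mult: "phi (p * q) = phi p * phi q" by (simp add: phi_def eval_sym_mult)
lemma phi_sum: "phi (sum g A) = (\<Sum>a\<in>A. phi (g a))" by (simp add: phi_def eval_sym_sum)
lemma phi_of_int: "phi (of_int z) = of_int z" by (simp add: phi_def)
lemma phi_power: "phi (p ^ n) = phi p ^ n" by (simp add: phi_def eval_sym_power)
lemma phi_lvar: "phi (lvar n) = xab * vb ^ n" by (simp add: phi_def lam_Suc_xab del: lam.simps)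

lemma single_single_pow: "Poly_Mapping.single (Poly_Mapping.single a b) (1::int) = lvar a ^ b"
proof (induction b)
  case 0 then show ?case by simp
next
  case (Suc b)
  have "Poly_Mapping.single a (Suc b) = Poly_Mapping.single a 1 + Poly_Mapping.single a b"
    by (simp flip: single_add)
  then have "Poly_Mapping.single (Poly_Mapping.single a (Suc b)) (1::int)
      = Poly_Mapping.single (Poly_Mapping.single a 1) 1 * Poly_Mapping.single (Poly_Mapping.single a b) 1"
    by (simp add: mult_single)
  then show ?case using Suc by (simp add: lvar_def)
qed

lemma P_append: "P (xs @ ys) = P xs * P ys"
  by (simp add: P_def)

lemma elem_Suc: "elem (int (Suc a)) = lvar a"
  by (simp add: elem_def del: of_nat_Suc)

lemma P_rep: "P (replicate b (Suc a)) = lvar a ^ b"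
  by (induction b) (auto simp: P_def elem_Suc simp del: of_nat_Suc)

lemma single_P: "\<exists>nu. Poly_Mapping.single m (1::int) = P nu"
proof (induction m rule: update_induct)
  case const
  then show ?case by (intro exI[of _ "[]"]) (simp add: P_def)
next
  case (update f a b)
  then obtain nu where nu: "Poly_Mapping.single f (1::int) = P nu" by blast
  have upd: "Poly_Mapping.update a b f = f + Poly_Mapping.single a b"
    by (rule poly_mapping_eqI)
      (use update.hyps(1) in \<open>auto simp: lookup_update lookup_add lookup_single in_keys_iff when_def\<close>)
  have "Poly_Mapping.single (Poly_Mapping.update a b f) (1::int)
      = Poly_Mapping.single f 1 * Poly_Mapping.single (Poly_Mapping.single a b) 1"
    unfolding upd by (simp add: mult_single)
  also have "\<dots> = P (nu @ replicate b (Suc a))"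
    by (simp add: nu single_single_pow P_append P_rep)
  finally show ?case by blast
qed

lemma all_good: "p \<in> Good"
proof (induction p rule: frag_induction[OF subset_UNIV])
  case 1 then show ?case by (rule Good_0)
next
  case (2 x)
  obtain nu where "Poly_Mapping.single x (1::int) = P nu" using single_P by blast
  then show ?case using main_good by simp
next
  case (3 a b) then show ?case by (rule Good_diff)
qed

lemma I22_ker: "p \<in> I22 \<Longrightarrow> phi p = 0"
proof -
  assume "p \<in> I22"
  then obtain F c where F: "finite F" "\<forall>q\<in>F. is_partition q \<and> contains22 q"
    "p = (\<Sum>q\<in>F. of_int (c q) * schur q)"
    unfolding I22_def by blast
  have "phi (schur q) = 0" if "q \<in> F" for q
  proof -
    have "phi (schur q) = Dm E (conj_part q)" by (simp add: schur_Dm phi_Dm)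
    also have "\<dots> = 0" using contains22_conj[of q] F(2) that by (intro Dm_E_zero) auto
    finally show ?thesis .
  qed
  then show "phi p = 0" unfolding F(3) by (simp add: phi_sum phi_mult phi_of_int)
qed

definition ex :: "nat \<times> nat \<Rightarrow> nat \<times> nat" where
  "ex k = (if snd k = 0 then (0, 0) else (fst k + 1, snd k - 1))"

lemma ex_inj: "inj_on ex K"
  unfolding inj_on_def K_def ex_def by (auto split: if_splits)

lemma cm: "[:c:] * p = smult c p" by simp

lemma monom_mono: "va ^ u * vb ^ v = monom (monom 1 u) v"
  unfolding va_pow vb_pow by (simp add: smult_monom cm)

lemma psi_phi_gen: "k \<in> K \<Longrightarrow> psi (phi (gen k)) = monom (monom 1 (fst (ex k))) (snd (ex k))"
proof -
  assume k: "k \<in> K"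
  show ?thesis
  proof (cases "snd k = 0")
    case True
    then have "k = (0, 0)" using k by (auto simp: K_def)
    then have "psi (phi (gen k)) = 1" by (simp add: gen_00 psi_1 phi_def)
    moreover have "monom (monom 1 0) 0 = (1::zab)" by (simp add: monom_0 one_pCons)
    ultimately show ?thesis using \<open>k = (0, 0)\<close> by (simp add: ex_def)
  next
    case False
    have "phi (gen k) = xab ^ fst k * (xab * vb ^ (snd k - 1))"
      using False by (simp add: gen_def phi_mult phi_power phi_lvar phi_elem E_def)
    then have "psi (phi (gen k)) = va ^ (fst k + 1) * vb ^ (snd k - 1)"
      by (simp add: psi_mult psi_power psi_xab psi_vb algebra_simps)
    then show ?thesis using False monom_mono[of "fst k + 1" "snd k - 1"] by (simp add: ex_def)
  qed
qed

lemma of_int_monom: "(of_int z :: zab) * monom (monom 1 u) v = monom (monom z u) v"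
proof -
  have "(of_int z :: zab) = [:[:z:]:]" by (simp add: of_int_poly)
  then show ?thesis by (simp add: smult_monom cm)
qed

lemma ker_I22: "phi p = 0 \<Longrightarrow> p \<in> I22"
proof -
  assume p0: "phi p = 0"
  obtain a b where ab: "p = a + b" "a \<in> I22" "b \<in> zspan gen K"
    using all_good[of p] unfolding Good_def by blast
  obtain S c where S: "finite S" "S \<subseteq> K" "b = (\<Sum>k\<in>S. of_int (c k) * gen k)"
    using ab(3) unfolding zspan_def by blast
  have "phi b = 0" using p0 ab I22_ker[OF ab(2)] by (simp add: phi_add)
  then have "psi (phi b) = 0" by (simp add: psi_0)
  moreover have "psi (phi b) = (\<Sum>k\<in>S. monom (monom (c k) (fst (ex k))) (snd (ex k)))"
    unfolding S(3) using S(2)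
    by (auto simp: phi_sum psi_sum phi_mult psi_mult phi_of_int psi_of_int psi_phi_gen of_int_monom
        intro!: sum.cong)
  ultimately have z: "(\<Sum>k\<in>S. monom (monom (c k) (fst (ex k))) (snd (ex k))) = 0" by simp
  have ck: "c k0 = 0" if k0: "k0 \<in> S" for k0
  proof -
    have "0 = coeff (coeff (\<Sum>k\<in>S. monom (monom (c k) (fst (ex k))) (snd (ex k))) (snd (ex k0))) (fst (ex k0))"
      using z by simp
    also have "\<dots> = (\<Sum>k\<in>S. if ex k = ex k0 then c k else 0)"
      by (simp add: coeff_sum prod_eq_iff if_distrib cong: if_cong) (rule sum.cong, auto simp: prod_eq_iff)
    also have "\<dots> = (\<Sum>k\<in>{k0}. c k)"
    proof (rule sum.mono_neutral_cong_right)
      show "\<forall>i\<in>S - {k0}. (if ex i = ex k0 then c i else 0) = 0"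
        using ex_inj S(2) k0 unfolding inj_on_def by auto
    qed (use S k0 in auto)
    finally show ?thesis by simp
  qed
  have "b = 0" unfolding S(3) using ck by simp
  then show "p \<in> I22" using ab by simp
qed

definition S0 :: "zab set" where "S0 = {of_int c + xab * q | c q. True}"

lemma S0_diff: "x \<in> S0 \<Longrightarrow> y \<in> S0 \<Longrightarrow> x - y \<in> S0"
proof -
  assume "x \<in> S0" "y \<in> S0"
  then obtain c q c' q' where "x = of_int c + xab * q" "y = of_int c' + xab * q'" unfolding S0_def by blast
  then have "x - y = of_int (c - c') + xab * (q - q')" by (simp add: algebra_simps)
  then show "x - y \<in> S0" unfolding S0_def by blast
qed

lemma S0_mult: "x \<in> S0 \<Longrightarrow> y \<in> S0 \<Longrightarrow> x * y \<in> S0"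
proof -
  assume "x \<in> S0" "y \<in> S0"
  then obtain c q c' q' where "x = of_int c + xab * q" "y = of_int c' + xab * q'" unfolding S0_def by blast
  then have "x * y = of_int (c * c') + xab * (of_int c * q' + of_int c' * q + xab * q * q')"
    by (simp add: algebra_simps)
  then show "x * y \<in> S0" unfolding S0_def by blast
qed

lemma S0_I: "y = of_int c + xab * q \<Longrightarrow> y \<in> S0"
  unfolding S0_def by blast

lemma S0_1: "1 \<in> S0"
  by (rule S0_I[of _ 1 0]) simp

lemma S0_0: "0 \<in> S0"
  by (rule S0_I[of _ 0 0]) simp

lemma S0_x: "xab * r \<in> S0"
  by (rule S0_I[of _ 0 r]) simp

lemma S0_power: "x \<in> S0 \<Longrightarrow> x ^ n \<in> S0"
  by (induction n) (auto intro: S0_mult S0_1)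

lemma S0_prod: "(\<And>i. i \<in> A \<Longrightarrow> g i \<in> S0) \<Longrightarrow> prod g A \<in> S0"
  by (induction A rule: infinite_finite_induct) (auto intro: S0_mult S0_1)

lemma range_sub: "phi p \<in> S0"
proof (induction p rule: frag_induction[OF subset_UNIV])
  case 1 then show ?case by (simp add: phi_def S0_0)
next
  case (2 m)
  have "phi (Poly_Mapping.single m 1) = emono (\<lambda>n. lam (Suc n) xab) m"
    by (simp add: phi_def eval_sym_single del: lam.simps)
  also have "\<dots> \<in> S0"
    unfolding emono_def lam_Suc_xab by (intro S0_prod S0_power S0_x)
  finally show ?case .
next
  case (3 a b) then show ?case by (simp add: phi_diff S0_diff)
qed

lemma R_diff: "x \<in> range phi \<Longrightarrow> y \<in> range phi \<Longrightarrow> x - y \<in> range phi"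
proof -
  assume "x \<in> range phi" "y \<in> range phi"
  then obtain p q where "x = phi p" "y = phi q" by blast
  then have "x - y = phi (p - q)" by (simp add: phi_diff)
  then show ?thesis by (metis rangeI)
qed

lemma R_add: "x \<in> range phi \<Longrightarrow> y \<in> range phi \<Longrightarrow> x + y \<in> range phi"
proof -
  assume "x \<in> range phi" "y \<in> range phi"
  then obtain p q where "x = phi p" "y = phi q" by blast
  then have "x + y = phi (p + q)" by (simp add: phi_add)
  then show ?thesis by (metis rangeI)
qed

lemma R_mult: "x \<in> range phi \<Longrightarrow> y \<in> range phi \<Longrightarrow> x * y \<in> range phi"
proof -
  assume "x \<in> range phi" "y \<in> range phi"
  then obtain p q where "x = phi p" "y = phi q" by blast
  then have "x * y = phi (p * q)" by (simp add: phi_mult)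
  then show ?thesis by (metis rangeI)
qed

lemma R_of_int: "of_int z \<in> range phi"
  using phi_of_int[of z] by (metis rangeI)

lemma R_xvb: "xab * vb ^ j \<in> range phi"
  using phi_lvar[of j] by (metis rangeI)

lemma R_xab: "xab \<in> range phi"
  using R_xvb[of 0] by simp

lemma va_eq: "va = xab - vb" by (simp add: xab_def)

lemma R_mon: "xab * va ^ i * vb ^ j \<in> range phi"
proof (induction i arbitrary: j)
  case 0 then show ?case using R_xvb by simp
next
  case (Suc i)
  have "xab * va ^ Suc i * vb ^ j = (xab * va ^ i * vb ^ j) * xab - xab * va ^ i * vb ^ Suc j"
    by (simp add: va_eq algebra_simps)
  moreover have "(xab * va ^ i * vb ^ j) * xab \<in> range phi" using Suc.IH[of j] R_xab by (rule R_mult)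
  ultimately show ?case using Suc.IH[of "Suc j"] by (metis R_diff)
qed

lemma const_pCons: "[:pCons z c:] = (of_int z :: zab) + va * [:c:]"
  by (simp add: va_def of_int_poly)

lemma R_const: "xab * va ^ i * vb ^ j * [:c:] \<in> range phi"
proof (induction c arbitrary: i)
  case 0 then show ?case using R_of_int[of 0] by simp
next
  case (pCons z c)
  have "xab * va ^ i * vb ^ j * [:pCons z c:]
     = of_int z * (xab * va ^ i * vb ^ j) + xab * va ^ Suc i * vb ^ j * [:c:]"
    by (simp add: const_pCons algebra_simps)
  moreover have "of_int z * (xab * va ^ i * vb ^ j) \<in> range phi" using R_of_int[of z] R_mon[of i j] by (rule R_mult)
  ultimately show ?case using pCons.IH[of "Suc i"] by (metis R_add)
qed

lemma pCons_split: "pCons c q = [:c:] + vb * (q :: zab)"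
  by (simp add: vb_def)

lemma R_x_poly: "xab * vb ^ j * q \<in> range phi"
proof (induction q arbitrary: j)
  case 0 then show ?case using R_of_int[of 0] by simp
next
  case (pCons c q)
  have "xab * vb ^ j * pCons c q = xab * vb ^ j * ([:c:] + vb * q)"
    by (simp only: pCons_split[symmetric])
  also have "\<dots> = xab * va ^ 0 * vb ^ j * [:c:] + xab * vb ^ Suc j * q"
    by (simp add: algebra_simps)
  finally have "xab * vb ^ j * pCons c q = xab * va ^ 0 * vb ^ j * [:c:] + xab * vb ^ Suc j * q" .
  then show ?case using pCons.IH[of "Suc j"] R_const[of 0 j c] by (metis R_add)
qed

lemma range_phi: "range phi = {of_int c + xab * q | c q. True}"
proof
  show "range phi \<subseteq> {of_int c + xab * q | c q. True}"
    using range_sub unfolding S0_def by blast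
next
  show "{of_int c + xab * q | c q. True} \<subseteq> range phi"
  proof
    fix y assume "y \<in> {of_int c + xab * q | c q. True}"
    then obtain c q where y: "y = of_int c + xab * q" by blast
    have "xab * q \<in> range phi" using R_x_poly[of 0 q] by simp
    then show "y \<in> range phi" unfolding y using R_of_int by (intro R_add)
  qed
qed

theorem corollary4:
  shows "{p. phi p = 0} = I22
         \<and> range phi = {of_int c + xab * q | c q. True}
         \<and> (\<forall>n. lam (Suc n) xab = xab * vb ^ n)"
proof (intro conjI)
  show "{p. phi p = 0} = I22" using I22_ker ker_I22 by blast
  show "range phi = {of_int c + xab * q | c q. True}" by (rule range_phi)
  show "\<forall>n. lam (Suc n) xab = xab * vb ^ n" using lam_Suc_xab by blast
qed

end
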